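(* Let $0<e<\Lambda$, $\phi_h>0$, $f:[0,\phi_h]\to(0,1]$ strictly concave, strictly decreasing, differentiable with $f(0)=1$. Consider the two-player game with action sets $[0,\phi_h]$ and payoffs $\tilde{\mathcal M}_i(\phi_i,\phi_{-i})$ given by: - if $\phi_i=\phi_{-i}$: $e\phi_i$ if $\phi_i<\underline\phi$, and $\frac{\Lambda}{2}f(\phi_i)\phi_i$ if $\phi_i\ge\underline\phi$; - if $\phi_i<\phi_{-i}$: $e\phi_i$ if $\phi_{-i}<\bar\phi$, and $\min\{\Lambda f(\phi_i),e\}\phi_i$ if $\phi_{-i}\ge\bar\phi$; - if $\phi_i>\phi_{-i}$: $e\phi_i$ if $\phi_i<\underline\phi$, $m(\phi_i)$ if $\phi_i\in[\underline\phi,\bar\phi)$, and $0$ if $\phi_i\ge\bar\phi$. Let $\phi^*_m$ be the unique maximizer of $m(\phi)=(\Lambda f(\phi)-e)\phi$ over $[0,\phi_h]$. If $\phi^*_m\le\underline\phi\le\phi_h$, then $(\underline\phi,\underline\phi)$ is a Nash equilibrium.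
   Context: These payoffs are the limiting (driver abandonment rate $\beta\to0$) long-run revenue rates of two symmetric ride-hailing platforms using static prices, when passengers (total Poisson rate $\Lambda$) split across platforms by a Wardrop equilibrium equalizing the probability of not obtaining a ride (either no available driver or rejection of the quoted price); $e$ is the effective driver arrival rate per platform and $f(\phi)$ the probability a passenger accepts price $\phi$. Thresholds: $\underline{\phi}:=\inf\{\phi\in[0,\phi_h]: f(\phi)\le 2e/\Lambda\}$, $\bar\phi:=\inf\{\phi\in[0,\phi_h]: f(\phi)\le e/\Lambda\}$, with $\inf\emptyset=+\infty$ (so $\underline\phi=f^{-1}(2e/\Lambda)$, $\bar\phi=f^{-1}(e/\Lambda)$ when in range, and $0$ when $2e/\Lambda>1$, resp. $e/\Lambda>1$). A Nash equilibrium is a profile from which no player can strictly increase its payoff by unilateral deviation. *)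

theory Defs
  imports "HOL-Analysis.Analysis" "HOL-Library.Extended_Real"
begin

definition strictly_concave_on :: "real set \<Rightarrow> (real \<Rightarrow> real) \<Rightarrow> bool" where
  "strictly_concave_on S f \<longleftrightarrow> convex S \<and>
     (\<forall>x\<in>S. \<forall>y\<in>S. \<forall>t::real. x \<noteq> y \<and> 0 < t \<and> t < 1 \<longrightarrow>
        t * f x + (1 - t) * f y < f (t * x + (1 - t) * y))"

text \<open>Thresholds, as infima in the extended reals (so that the infimum of the empty set is +infinity).\<close>
definition phi_low :: "real \<Rightarrow> real \<Rightarrow> (real \<Rightarrow> real) \<Rightarrow> real \<Rightarrow> ereal" where
  "phi_low Lam e f phih = Inf (ereal ` {p \<in> {0..phih}. f p \<le> 2 * e / Lam})"

definition phi_bar :: "real \<Rightarrow> real \<Rightarrow> (real \<Rightarrow> real) \<Rightarrow> real \<Rightarrow> ereal" where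
  "phi_bar Lam e f phih = Inf (ereal ` {p \<in> {0..phih}. f p \<le> e / Lam})"

definition mfun :: "real \<Rightarrow> real \<Rightarrow> (real \<Rightarrow> real) \<Rightarrow> real \<Rightarrow> real" where
  "mfun Lam e f p = (Lam * f p - e) * p"

definition payoff :: "real \<Rightarrow> real \<Rightarrow> (real \<Rightarrow> real) \<Rightarrow> real \<Rightarrow> real \<Rightarrow> real \<Rightarrow> real" where
  "payoff Lam e f phih q1 q2 =
     (let lo = phi_low Lam e f phih; hi = phi_bar Lam e f phih in
      if q1 = q2 then
        (if ereal q1 < lo then e * q1 else Lam / 2 * f q1 * q1)
      else if q1 < q2 then
        (if ereal q2 < hi then e * q1 else min (Lam * f q1) e * q1)
      else
        (if ereal q1 < lo then e * q1
         else if ereal q1 < hi then mfun Lam e f q1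
         else 0))"

definition nash_equilibrium :: "(real \<Rightarrow> real \<Rightarrow> real) \<Rightarrow> real set \<Rightarrow> real \<Rightarrow> real \<Rightarrow> bool" where
  "nash_equilibrium M A p1 p2 \<longleftrightarrow> p1 \<in> A \<and> p2 \<in> A \<and>
     (\<forall>x\<in>A. M x p2 \<le> M p1 p2) \<and> (\<forall>x\<in>A. M x p1 \<le> M p2 p1)"

end

theory Submission
  imports Defs
begin

lemma m_conc:
  fixes Lam e phih a b t :: real and f :: "real \<Rightarrow> real"
  assumes L: "0 < Lam"
    and fconc: "strictly_concave_on {0..phih} f"
    and fdec: "strict_antimono_on {0..phih} f"
    and a: "a \<in> {0..phih}" and b: "b \<in> {0..phih}" and ab: "a \<noteq> b"
    and t: "0 < t" "t < 1"
  shows "t * mfun Lam e f a + (1 - t) * mfun Lam e f b \<le> mfun Lam e f (t * a + (1 - t) * b)"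
proof -
  define z where "z = t * a + (1 - t) * b"
  have z0: "0 \<le> z" using a b t unfolding z_def by (auto intro: add_nonneg_nonneg)
  have fz: "t * f a + (1 - t) * f b < f z"
    using fconc a b ab t unfolding strictly_concave_on_def z_def by blast
  have mon: "(a - b) * (f b - f a) \<ge> 0"
  proof (cases "a < b")
    case True
    then have "f a > f b" using fdec a b by (auto simp: monotone_on_def)
    then show ?thesis using True by (simp add: mult_nonpos_nonpos)
  next
    case False
    then have "b < a" using ab by auto
    then have "f b > f a" using fdec a b by (auto simp: monotone_on_def)
    then show ?thesis using \<open>b < a\<close> by simp
  qed
  have id: "z * (t * f a + (1 - t) * f b) = t * a * f a + (1 - t) * b * f b + t * (1 - t) * ((a - b) * (f b - f a))"
    unfolding z_def by (simp add: algebra_simps)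
  have "t * (1 - t) * ((a - b) * (f b - f a)) \<ge> 0" using t mon by simp
  then have h1: "z * (t * f a + (1 - t) * f b) \<ge> t * a * f a + (1 - t) * b * f b" using id by linarith
  have h2: "z * f z \<ge> z * (t * f a + (1 - t) * f b)" using z0 fz by (intro mult_left_mono) auto
  have "t * mfun Lam e f a + (1 - t) * mfun Lam e f b = Lam * (t * a * f a + (1 - t) * b * f b) - e * z"
    unfolding mfun_def z_def by (simp add: algebra_simps)
  also have "\<dots> \<le> Lam * (z * f z) - e * z"
    using h1 h2 L by (simp add: mult_left_mono)
  also have "\<dots> = mfun Lam e f z" unfolding mfun_def by (simp add: algebra_simps)
  finally show ?thesis unfolding z_def .
qed

theorem theorem4:
  fixes Lam e phih phim :: real and f :: "real \<Rightarrow> real"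
  assumes he: "0 < e" and heL: "e < Lam" and hph: "0 < phih"
    and frange: "\<forall>p\<in>{0..phih}. 0 < f p \<and> f p \<le> 1"
    and fconc: "strictly_concave_on {0..phih} f"
    and fdec: "strict_antimono_on {0..phih} f"
    and fdiff: "\<forall>p\<in>{0..phih}. f differentiable (at p within {0..phih})"
    and f0: "f 0 = 1"
    and mmax: "phim \<in> {0..phih}"
              "\<forall>p\<in>{0..phih}. p \<noteq> phim \<longrightarrow> mfun Lam e f p < mfun Lam e f phim"
    and hcond: "ereal phim \<le> phi_low Lam e f phih" "phi_low Lam e f phih \<le> ereal phih"
  shows "nash_equilibrium (payoff Lam e f phih) {0..phih}
           (real_of_ereal (phi_low Lam e f phih)) (real_of_ereal (phi_low Lam e f phih))"
proof -
  have Lpos: "0 < Lam" using he heL by linarith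
  define c where "c = 2 * e / Lam"
  define S where "S = {p \<in> {0..phih}. f p \<le> c}"
  have lowS: "phi_low Lam e f phih = Inf (ereal ` S)" unfolding phi_low_def S_def c_def by simp
  have cont: "continuous_on {0..phih} f"
    using fdiff differentiable_imp_continuous_within continuous_on_eq_continuous_within by blast
  have Sne: "S \<noteq> {}"
  proof
    assume "S = {}"
    then have "phi_low Lam e f phih = \<infinity>" using lowS by (simp add: top_ereal_def)
    then show False using hcond(2) by simp
  qed
  have Scl: "closed S"
  proof -
    have "closed ({0..phih} \<inter> f -` {..c})"
      by (rule continuous_closed_preimage[OF cont]) auto
    moreover have "S = {0..phih} \<inter> f -` {..c}" unfolding S_def by auto
    ultimately show ?thesis by simp
  qed
  have Sbdd: "bdd_below S" unfolding S_def by (rule bdd_belowI[of _ 0]) auto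
  define l where "l = Inf S"
  have lS: "l \<in> S" unfolding l_def using closed_contains_Inf Sne Sbdd Scl by blast
  have lle: "\<And>s. s \<in> S \<Longrightarrow> l \<le> s" unfolding l_def using Sbdd by (simp add: cInf_lower)
  have lowl: "phi_low Lam e f phih = ereal l"
    unfolding lowS
  proof (rule antisym)
    show "Inf (ereal ` S) \<le> ereal l" using lS by (simp add: INF_lower)
    show "ereal l \<le> Inf (ereal ` S)" using lle by (auto intro: Inf_greatest)
  qed
  have lrange: "l \<in> {0..phih}" and flc: "f l \<le> c" using lS unfolding S_def by auto
  have fl_ge: "f l \<ge> c" if "0 < l"
  proof -
    define T where "T = {p \<in> {0..phih}. f p \<in> {c..}}"
    have "closed ({0..phih} \<inter> f -` {c..})"
      by (rule continuous_closed_preimage[OF cont]) auto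
    moreover have "T = {0..phih} \<inter> f -` {c..}" unfolding T_def by auto
    ultimately have Tcl: "closed T" by simp
    have "{0..<l} \<subseteq> T"
    proof
      fix x assume x: "x \<in> {0..<l}"
      then have "x \<in> {0..phih}" using lrange by auto
      moreover have "x \<notin> S" using x lle by force
      ultimately show "x \<in> T" unfolding S_def T_def by auto
    qed
    then have "closure {0..<l} \<subseteq> T" using Tcl closure_minimal by blast
    then have "l \<in> T" using that by auto
    then show ?thesis unfolding T_def by auto
  qed
  have fl_pos: "f l > 0" using frange lrange by auto
  have phim_l: "phim \<le> l" using hcond(1) lowl by simp
  have rl: "real_of_ereal (phi_low Lam e f phih) = l" using lowl by simp
  have at_l: "payoff Lam e f phih l l = Lam / 2 * f l * l"
    unfolding payoff_def Let_def lowl by simp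
  have key: "payoff Lam e f phih x l \<le> payoff Lam e f phih l l" if x: "x \<in> {0..phih}" for x
  proof -
    consider "x = l" | "x < l" | "l < x" by linarith
    then show ?thesis
    proof cases
      case 1 then show ?thesis by simp
    next
      case 2
      then have lp: "0 < l" using x by auto
      have ex: "e * x \<le> Lam / 2 * f l * l"
      proof -
        have "e * x \<le> e * l" using 2 he by simp
        also have "e * l = Lam / 2 * c * l" unfolding c_def using Lpos by simp
        also have "\<dots> \<le> Lam / 2 * f l * l" using fl_ge[OF lp] Lpos lp by (simp add: mult_right_mono)
        finally show ?thesis .
      qed
      have "min (Lam * f x) e * x \<le> e * x" using x by (simp add: mult_right_mono)
      then show ?thesis using ex 2 unfolding at_l unfolding payoff_def Let_def by auto
    next
      case 3
      have nn: "0 \<le> Lam / 2 * f l * l" using Lpos fl_pos lrange by simp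
      have mx: "mfun Lam e f x \<le> mfun Lam e f l"
      proof (cases "l = phim")
        case True
        then show ?thesis using mmax(2) x 3 by (auto intro: less_imp_le)
      next
        case False
        then have pl: "phim < l" using phim_l by simp
        define t where "t = (x - l) / (x - phim)"
        have t01: "0 < t" "t < 1" unfolding t_def using pl 3 by (auto simp: field_simps)
        have tt: "t * (x - phim) = x - l" unfolding t_def using pl 3 by simp
        have leq: "t * phim + (1 - t) * x = l"
        proof -
          have "t * phim + (1 - t) * x = x - t * (x - phim)" by (simp add: algebra_simps)
          then show ?thesis using tt by simp
        qed
        have ne: "phim \<noteq> x" using pl 3 by simp
        have "t * mfun Lam e f phim + (1 - t) * mfun Lam e f x \<le> mfun Lam e f l"
          using m_conc[OF Lpos fconc fdec mmax(1) x ne t01] unfolding leq .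
        moreover have "mfun Lam e f x \<le> mfun Lam e f phim"
          using mmax(2) x 3 pl by (auto intro: less_imp_le)
        then have "t * mfun Lam e f x \<le> t * mfun Lam e f phim" using t01 by (simp add: mult_left_mono)
        ultimately show ?thesis by (simp add: algebra_simps)
      qed
      have "mfun Lam e f l \<le> Lam / 2 * f l * l"
      proof -
        have "Lam * f l \<le> 2 * e" using flc Lpos unfolding c_def by (simp add: field_simps)
        then have "(Lam / 2 * f l - e) * l \<le> 0" using lrange by (simp add: mult_nonpos_nonneg)
        then show ?thesis unfolding mfun_def by (simp add: algebra_simps)
      qed
      then show ?thesis using mx nn 3 unfolding at_l unfolding payoff_def Let_def lowl by auto
    qed
  qed
  show ?thesis unfolding nash_equilibrium_def rl using key lrange by auto
qed

end
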